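(* Let $G,G'$ be finitely generated groups with word metrics $d,d'$ (from Cayley graphs with respect to finite generating sets), let $v_n$ and $v'_n$ be the cardinalities of the balls of radius $n$ around the identity in $G$ and $G'$, let $a:=\lim_n v_n^{1/n}$ and $a':=\lim_n (v'_n)^{1/n}$ be the growth rates, assume $a>1$ and $a'>1$, and set $c:=\log a/\log a'$. Then there exist a non-decreasing function $f:\mathbb Z_{\ge0}\to\mathbb Z_{\ge0}$ and a strictly increasing sequence $(r_j)_{j}$ in $\mathbb Z_{\ge0}$ such that, writing $r'_j:=f(r_j)$, $f(0)=0$, $\sup_n v'_{r'_n}/v_{r_n}<\infty$, $\inf_n v'_{r'_n}/v_{r_n}>0$, and $$\forall m\ \exists N\ \forall n\ge N:\quad |f(n+m)-f(n)-cm|\le 1.$$ *)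

theory Defs
  imports "HOL-Analysis.Analysis" "HOL-Algebra.Group" "HOL-Algebra.Generated_Groups"
begin

definition fin_gen_set :: "('a, 'b) monoid_scheme \<Rightarrow> 'a set \<Rightarrow> bool" where
  "fin_gen_set G S \<longleftrightarrow> finite S \<and> S \<subseteq> carrier G \<and> generate G S = carrier G"

definition word_ball :: "('a, 'b) monoid_scheme \<Rightarrow> 'a set \<Rightarrow> nat \<Rightarrow> 'a set" where
  "word_ball G S n = {x. \<exists>ws. length ws \<le> n \<and> set ws \<subseteq> S \<union> (m_inv G ` S)
        \<and> x = foldr (\<lambda>u y. u \<otimes>\<^bsub>G\<^esub> y) ws \<one>\<^bsub>G\<^esub>}"

definition ball_card :: "('a, 'b) monoid_scheme \<Rightarrow> 'a set \<Rightarrow> nat \<Rightarrow> nat" where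
  "ball_card G S n = card (word_ball G S n)"

definition growth_rate :: "('a, 'b) monoid_scheme \<Rightarrow> 'a set \<Rightarrow> real" where
  "growth_rate G S = lim (\<lambda>n. root n (real (ball_card G S n)))"

end

theory Submission
  imports Defs
begin


lemma ev_closed:
  assumes "group G" "set ws \<subseteq> carrier G"
  shows "foldr (\<lambda>u y. u \<otimes>\<^bsub>G\<^esub> y) ws \<one>\<^bsub>G\<^esub> \<in> carrier G"
  using assms(2) by (induction ws) (auto intro: group.is_monoid[OF assms(1)] monoid.m_closed monoid.one_closed)

lemma ev_append:
  assumes "group G" "set ws \<subseteq> carrier G" "set vs \<subseteq> carrier G"
  shows "foldr (\<lambda>u y. u \<otimes>\<^bsub>G\<^esub> y) (ws @ vs) \<one>\<^bsub>G\<^esub> =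
     foldr (\<lambda>u y. u \<otimes>\<^bsub>G\<^esub> y) ws \<one>\<^bsub>G\<^esub> \<otimes>\<^bsub>G\<^esub> foldr (\<lambda>u y. u \<otimes>\<^bsub>G\<^esub> y) vs \<one>\<^bsub>G\<^esub>"
  using assms(2)
proof (induction ws)
  case Nil
  then show ?case using ev_closed[OF assms(1) assms(3)] group.is_monoid[OF assms(1)]
    by (simp add: monoid.l_one)
next
  case (Cons a ws)
  then show ?case using ev_closed[OF assms(1) assms(3)] ev_closed[OF assms(1), of ws] group.is_monoid[OF assms(1)]
    by (simp add: monoid.m_assoc)
qed

lemma gens_carrier:
  assumes "group G" "fin_gen_set G S"
  shows "S \<union> m_inv G ` S \<subseteq> carrier G" "finite (S \<union> m_inv G ` S)"
  using assms by (auto simp: fin_gen_set_def intro: group.inv_closed)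

lemma word_ball_sub:
  assumes "group G" "fin_gen_set G S"
  shows "word_ball G S n \<subseteq> (\<lambda>ws. foldr (\<lambda>u y. u \<otimes>\<^bsub>G\<^esub> y) ws \<one>\<^bsub>G\<^esub>) ` {ws. set ws \<subseteq> S \<union> m_inv G ` S \<and> length ws \<le> n}"
  unfolding word_ball_def by blast

lemma word_ball_finite:
  assumes "group G" "fin_gen_set G S"
  shows "finite (word_ball G S n)"
  by (rule finite_subset[OF word_ball_sub[OF assms]])
     (intro finite_imageI finite_lists_length_le gens_carrier[OF assms])

lemma one_in_word_ball: "\<one>\<^bsub>G\<^esub> \<in> word_ball G S n"
  unfolding word_ball_def by (rule CollectI, rule exI[of _ "[]"]) simp

lemma ball_card_pos:
  assumes "group G" "fin_gen_set G S"
  shows "ball_card G S n \<ge> 1"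
  unfolding ball_card_def using word_ball_finite[OF assms] one_in_word_ball
  by (metis One_nat_def Suc_leI card_gt_0_iff empty_iff)

lemma ball_card_0:
  assumes "group G" "fin_gen_set G S"
  shows "ball_card G S 0 = 1"
proof -
  have "word_ball G S 0 = {\<one>\<^bsub>G\<^esub>}" unfolding word_ball_def by auto
  then show ?thesis by (simp add: ball_card_def)
qed

lemma ball_card_mono:
  assumes "group G" "fin_gen_set G S"
  shows "mono (ball_card G S)"
proof (rule monoI)
  fix n m :: nat assume "n \<le> m"
  then have "word_ball G S n \<subseteq> word_ball G S m" unfolding word_ball_def
    using le_trans by blast
  then show "ball_card G S n \<le> ball_card G S m"
    unfolding ball_card_def by (rule card_mono[OF word_ball_finite[OF assms]])
qed

lemma ball_card_submult:
  assumes "group G" "fin_gen_set G S"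
  shows "ball_card G S (n + m) \<le> ball_card G S n * ball_card G S m"
proof -
  let ?ev = "\<lambda>ws. foldr (\<lambda>u y. u \<otimes>\<^bsub>G\<^esub> y) ws \<one>\<^bsub>G\<^esub>"
  have T: "S \<union> m_inv G ` S \<subseteq> carrier G" by (rule gens_carrier[OF assms])
  have "word_ball G S (n + m) \<subseteq> (\<lambda>p. fst p \<otimes>\<^bsub>G\<^esub> snd p) ` (word_ball G S n \<times> word_ball G S m)"
  proof
    fix x assume "x \<in> word_ball G S (n + m)"
    then obtain ws where ws: "length ws \<le> n + m" "set ws \<subseteq> S \<union> m_inv G ` S" "x = ?ev ws"
      unfolding word_ball_def by blast
    have s1: "set (take n ws) \<subseteq> S \<union> m_inv G ` S" using ws(2) set_take_subset by fast
    have s2: "set (drop n ws) \<subseteq> S \<union> m_inv G ` S" using ws(2) set_drop_subset by fast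
    have "x = ?ev (take n ws) \<otimes>\<^bsub>G\<^esub> ?ev (drop n ws)"
    proof -
      have "set (take n ws) \<subseteq> carrier G" "set (drop n ws) \<subseteq> carrier G" using subset_trans[OF s1 T] subset_trans[OF s2 T] by simp_all
      from ev_append[OF assms(1) this] show ?thesis using ws(3) by simp
    qed
    moreover have "?ev (take n ws) \<in> word_ball G S n"
      unfolding word_ball_def using s1 by (intro CollectI exI[of _ "take n ws"]) simp
    moreover have "?ev (drop n ws) \<in> word_ball G S m"
      unfolding word_ball_def using s2 ws(1) by (intro CollectI exI[of _ "drop n ws"]) simp
    ultimately show "x \<in> (\<lambda>p. fst p \<otimes>\<^bsub>G\<^esub> snd p) ` (word_ball G S n \<times> word_ball G S m)"
      by force
  qed
  then have "card (word_ball G S (n + m)) \<le> card ((\<lambda>p. fst p \<otimes>\<^bsub>G\<^esub> snd p) ` (word_ball G S n \<times> word_ball G S m))"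
    by (intro card_mono finite_imageI finite_cartesian_product word_ball_finite[OF assms])
  also have "\<dots> \<le> card (word_ball G S n \<times> word_ball G S m)" by (rule card_image_le)
    (intro finite_cartesian_product word_ball_finite[OF assms])
  finally show ?thesis by (simp add: ball_card_def card_cartesian_product)
qed



lemma subadd_iter:
  fixes u :: "nat \<Rightarrow> real"
  assumes sub: "\<And>m n. u (m + n) \<le> u m + u n"
  shows "u (q * k + r) \<le> real q * u k + u r"
proof (induction q)
  case 0 then show ?case by simp
next
  case (Suc q)
  have "u (Suc q * k + r) = u (k + (q * k + r))" by (simp add: algebra_simps)
  also have "\<dots> \<le> u k + u (q * k + r)" by (rule sub)
  also have "\<dots> \<le> u k + (real q * u k + u r)" using Suc by simp
  finally show ?case by (simp add: algebra_simps)
qed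

lemma fekete:
  fixes u :: "nat \<Rightarrow> real"
  assumes nonneg: "\<And>n. u n \<ge> 0" and sub: "\<And>m n. u (m + n) \<le> u m + u n"
  defines "L \<equiv> (INF n\<in>{1..}. u n / real n)"
  shows "(\<lambda>n. u n / real n) \<longlonglongrightarrow> L" and "\<And>n. n \<ge> 1 \<Longrightarrow> L \<le> u n / real n"
proof -
  have bdd: "bdd_below ((\<lambda>n. u n / real n) ` {1..})"
    by (rule bdd_belowI[of _ 0]) (auto intro: divide_nonneg_nonneg nonneg)
  show low: "\<And>n. n \<ge> 1 \<Longrightarrow> L \<le> u n / real n"
    unfolding L_def by (rule cINF_lower[OF bdd]) simp
  show "(\<lambda>n. u n / real n) \<longlonglongrightarrow> L"
  proof (rule LIMSEQ_I)
    fix e :: real assume e: "e > 0"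
    have "L < L + e/2" using e by simp
    then obtain k where k: "k \<in> {1..}" "u k / real k < L + e/2"
      unfolding L_def by (subst (asm) cINF_less_iff[OF _ bdd]) auto
    define M where "M = (\<Sum>i<k. u i)"
    have M0: "M \<ge> 0" unfolding M_def by (intro sum_nonneg nonneg)
    obtain N :: nat where N: "N > 2 * M / e" using reals_Archimedean2 by blast
    show "\<exists>no. \<forall>n\<ge>no. norm (u n / real n - L) < e"
    proof (intro exI[of _ "N + 1"] allI impI)
      fix n assume n: "n \<ge> N + 1"
      then have npos: "real n > 0" by simp
      have kpos: "k > 0" using k by auto
      have "u n = u ((n div k) * k + n mod k)" by simp
      also have "\<dots> \<le> real (n div k) * u k + u (n mod k)" by (rule subadd_iter[OF sub])
      also have "u (n mod k) \<le> M" unfolding M_def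
        using kpos by (intro member_le_sum) (auto intro: nonneg)
      finally have un: "u n \<le> real (n div k) * u k + M" by simp
      have "real (n div k) * real k \<le> real n"
      proof -
        have "n div k * k \<le> n" by (simp add: div_times_less_eq_dividend)
        then show ?thesis by (metis of_nat_le_iff of_nat_mult)
      qed
      then have "real (n div k) / real n \<le> 1 / real k"
        using npos kpos by (simp add: field_simps)
      then have "real (n div k) * u k / real n \<le> u k / real k"
      proof -
        have "real (n div k) / real n * u k \<le> 1 / real k * u k"
          by (rule mult_right_mono[OF \<open>real (n div k) / real n \<le> 1 / real k\<close> nonneg])
        then show ?thesis by simp
      qed
      moreover have "M / real n < e / 2"
      proof -
        have "2 * M / e < real n" using N n by linarith
        then show ?thesis using e npos by (simp add: field_simps)
      qed
      moreover have "u n / real n \<le> real (n div k) * u k / real n + M / real n"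
        using un npos by (simp add: divide_right_mono add_divide_distrib[symmetric])
      ultimately have "u n / real n < L + e" using k by linarith
      moreover have "L \<le> u n / real n" using low n by simp
      ultimately show "norm (u n / real n - L) < e" by simp
    qed
  qed
qed



definition nxt :: "(nat \<Rightarrow> real) \<Rightarrow> real \<Rightarrow> nat \<Rightarrow> nat \<Rightarrow> nat" where
  "nxt e c j x = (SOME y. y > 2*x \<and> \<bar>e y\<bar> \<le> c/(8*(real j+1)) * real y \<and> \<bar>e x\<bar> \<le> c/(8*(real j+1)) * real y)"

primrec rs :: "(nat \<Rightarrow> real) \<Rightarrow> real \<Rightarrow> nat \<Rightarrow> nat" where
  "rs e c 0 = 0"
| "rs e c (Suc j) = nxt e c j (rs e c j)"

lemma nxt_ex:
  fixes j x :: nat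
  assumes c: "c > 0" and lim: "(\<lambda>n. e n / real n) \<longlonglongrightarrow> 0"
  shows "\<exists>y. y > 2*x \<and> \<bar>e y\<bar> \<le> c/(8*(real j+1)) * real y \<and> \<bar>e x\<bar> \<le> c/(8*(real j+1)) * real y"
proof -
  define d where "d = c/(8*(real j+1))"
  have d: "d > 0" unfolding d_def using c by simp
  obtain M :: nat where M: "\<bar>e x\<bar> / d \<le> M" using real_arch_simple by blast
  have ev1: "eventually (\<lambda>n. \<bar>e n / real n\<bar> < d) sequentially"
    using lim d by (auto simp: tendsto_iff dist_real_def)
  have ev2: "eventually (\<lambda>n. n > 2*x + M) sequentially" by (rule eventually_gt_at_top)
  obtain N where N: "\<forall>n\<ge>N. \<bar>e n / real n\<bar> < d \<and> n > 2*x + M"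
    using eventually_conj[OF ev1 ev2] unfolding eventually_sequentially by blast
  have a: "\<bar>e N / real N\<bar> < d" and b: "N > 2*x + M" using N by auto
  have Npos: "real N > 0" using b by simp
  have "\<bar>e N\<bar> \<le> d * N" using a Npos by (simp add: abs_divide field_simps)
  moreover have "\<bar>e x\<bar> \<le> d * N"
  proof -
    have "\<bar>e x\<bar> \<le> d * M" using M d by (simp add: field_simps)
    also have "\<dots> \<le> d * N" using b d by (intro mult_left_mono) auto
    finally show ?thesis .
  qed
  ultimately show ?thesis using b unfolding d_def by (intro exI[of _ N]) auto
qed

lemma rs_props:
  assumes c: "c > 0" and lim: "(\<lambda>n. e n / real n) \<longlonglongrightarrow> 0"
  shows "rs e c (Suc j) > 2 * rs e c j"
    "\<bar>e (rs e c (Suc j))\<bar> \<le> c/(8*(real j+1)) * real (rs e c (Suc j))"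
    "\<bar>e (rs e c j)\<bar> \<le> c/(8*(real j+1)) * real (rs e c (Suc j))"
proof -
  have "rs e c (Suc j) > 2 * rs e c j \<and> \<bar>e (rs e c (Suc j))\<bar> \<le> c/(8*(real j+1)) * real (rs e c (Suc j))
     \<and> \<bar>e (rs e c j)\<bar> \<le> c/(8*(real j+1)) * real (rs e c (Suc j))"
    unfolding rs.simps nxt_def by (rule someI_ex[OF nxt_ex[OF c lim]])
  then show "rs e c (Suc j) > 2 * rs e c j"
    "\<bar>e (rs e c (Suc j))\<bar> \<le> c/(8*(real j+1)) * real (rs e c (Suc j))"
    "\<bar>e (rs e c j)\<bar> \<le> c/(8*(real j+1)) * real (rs e c (Suc j))" by blast+
qed

lemma rs_strict_mono:
  assumes c: "c > 0" and lim: "(\<lambda>n. e n / real n) \<longlonglongrightarrow> 0"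
  shows "strict_mono (rs e c)"
  unfolding strict_mono_Suc_iff
proof
  fix j show "rs e c j < rs e c (Suc j)" using rs_props(1)[OF c lim, of j] by linarith
qed

definition sig :: "(nat \<Rightarrow> real) \<Rightarrow> real \<Rightarrow> nat \<Rightarrow> real" where
  "sig e c j = (e (rs e c (Suc j)) - e (rs e c j)) / (real (rs e c (Suc j)) - real (rs e c j))"

lemma sig_bound:
  assumes c: "c > 0" and lim: "(\<lambda>n. e n / real n) \<longlonglongrightarrow> 0"
  shows "\<bar>sig e c j\<bar> \<le> c / (2 * (j+1))"
proof -
  define R where "R = real (rs e c (Suc j))"
  define R0 where "R0 = real (rs e c j)"
  define d where "d = c/(8*(real j+1))"
  have d: "d > 0" unfolding d_def using c by simp
  have h1: "R > 2 * R0" unfolding R_def R0_def using rs_props(1)[OF c lim, of j]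
    by (metis of_nat_less_iff of_nat_mult of_nat_numeral)
  have R0: "R0 \<ge> 0" unfolding R0_def by simp
  have D1: "R - R0 > 0" using h1 R0 by linarith
  have D2: "R \<le> 2 * (R - R0)" using h1 R0 by (simp add: algebra_simps)
  note D = D1 D2
  have e1: "\<bar>e (rs e c (Suc j))\<bar> \<le> d * R" using rs_props(2)[OF c lim, of j] unfolding d_def R_def by simp
  have e0: "\<bar>e (rs e c j)\<bar> \<le> d * R" using rs_props(3)[OF c lim, of j] unfolding d_def R_def by simp
  have "\<bar>sig e c j\<bar> * (R - R0) = \<bar>e (rs e c (Suc j)) - e (rs e c j)\<bar>"
    unfolding sig_def R_def[symmetric] R0_def[symmetric] using D by (simp add: abs_divide)
  also have "\<dots> \<le> 2 * d * R" using e1 e0 by linarith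
  also have "\<dots> \<le> 4 * d * (R - R0)" using D d by (simp add: mult_left_mono)
  finally have "\<bar>sig e c j\<bar> \<le> 4 * d" using D by (simp add: mult_le_cancel_right)
  then show ?thesis unfolding d_def by (simp add: field_simps)
qed

definition idx :: "(nat \<Rightarrow> real) \<Rightarrow> real \<Rightarrow> nat \<Rightarrow> nat" where
  "idx e c n = (LEAST j. n < rs e c (Suc j))"

lemma idx_eq:
  assumes c: "c > 0" and lim: "(\<lambda>n. e n / real n) \<longlonglongrightarrow> 0"
    and "rs e c j \<le> n" "n < rs e c (Suc j)"
  shows "idx e c n = j"
  unfolding idx_def
proof (rule Least_equality)
  show "n < rs e c (Suc j)" by fact
  fix j' assume "n < rs e c (Suc j')"
  show "j \<le> j'"
  proof (rule ccontr)
    assume "\<not> j \<le> j'"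
    then have "Suc j' \<le> j" by simp
    then have "rs e c (Suc j') \<le> rs e c j"
      using strict_mono_less_eq[OF rs_strict_mono[OF c lim]] by blast
    then show False using \<open>n < rs e c (Suc j')\<close> \<open>rs e c j \<le> n\<close> by linarith
  qed
qed

lemma idx_ge:
  assumes c: "c > 0" and lim: "(\<lambda>n. e n / real n) \<longlonglongrightarrow> 0"
    and "rs e c j \<le> n"
  shows "j \<le> idx e c n"
proof -
  have ex: "\<exists>j. n < rs e c (Suc j)"
    using strict_mono_imp_increasing[OF rs_strict_mono[OF c lim], of "Suc n"] by (intro exI[of _ n]) simp
  have "n < rs e c (Suc (idx e c n))" unfolding idx_def by (rule LeastI_ex[OF ex])
  show ?thesis
  proof (rule ccontr)
    assume "\<not> j \<le> idx e c n"
    then have "Suc (idx e c n) \<le> j" by simp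
    then have "rs e c (Suc (idx e c n)) \<le> rs e c j"
      using strict_mono_less_eq[OF rs_strict_mono[OF c lim]] by blast
    then show False using \<open>n < rs e c (Suc (idx e c n))\<close> assms(3) by linarith
  qed
qed

definition gg :: "(nat \<Rightarrow> real) \<Rightarrow> real \<Rightarrow> nat \<Rightarrow> real" where
  "gg e c n = (\<Sum>i<n. sig e c (idx e c i))"

lemma gg_Suc: "gg e c (Suc n) - gg e c n = sig e c (idx e c n)"
  unfolding gg_def by simp

lemma gg_seg:
  assumes c: "c > 0" and lim: "(\<lambda>n. e n / real n) \<longlonglongrightarrow> 0"
    and "k \<le> rs e c (Suc j) - rs e c j"
  shows "gg e c (rs e c j + k) = gg e c (rs e c j) + real k * sig e c j"
  using assms(3)
proof (induction k)
  case 0 then show ?case by simp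
next
  case (Suc k)
  have m: "rs e c j < rs e c (Suc j)" by (rule strict_monoD[OF rs_strict_mono[OF c lim] lessI])
  have "idx e c (rs e c j + k) = j" using Suc.prems m by (intro idx_eq[OF c lim]) auto
  then have "gg e c (rs e c j + Suc k) = gg e c (rs e c j + k) + sig e c j"
    using gg_Suc[of e c "rs e c j + k"] by simp
  then show ?case using Suc by (simp add: algebra_simps)
qed

lemma gg_at_rs:
  assumes c: "c > 0" and lim: "(\<lambda>n. e n / real n) \<longlonglongrightarrow> 0" and e0: "e 0 = 0"
  shows "gg e c (rs e c j) = e (rs e c j)"
proof (induction j)
  case 0 then show ?case using e0 by (simp add: gg_def)
next
  case (Suc j)
  have m: "rs e c j < rs e c (Suc j)" by (rule strict_monoD[OF rs_strict_mono[OF c lim] lessI])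
  have "gg e c (rs e c (Suc j)) = gg e c (rs e c j + (rs e c (Suc j) - rs e c j))" using m by simp
  also have "\<dots> = e (rs e c j) + real (rs e c (Suc j) - rs e c j) * sig e c j"
    using gg_seg[OF c lim, of "rs e c (Suc j) - rs e c j" j] Suc by simp
  also have "\<dots> = e (rs e c (Suc j))"
    using m unfolding sig_def by (simp add: of_nat_diff)
  finally show ?case .
qed

lemma gg_inc_bound:
  assumes c: "c > 0" and lim: "(\<lambda>n. e n / real n) \<longlonglongrightarrow> 0"
  shows "\<bar>gg e c (Suc n) - gg e c n\<bar> \<le> c / 2"
proof -
  have "\<bar>sig e c (idx e c n)\<bar> \<le> c / (2 * (idx e c n + 1))" by (rule sig_bound[OF c lim])
  also have "\<dots> \<le> c / 2" using c by (simp add: field_simps)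
  finally show ?thesis by (simp add: gg_Suc)
qed

lemma gg_inc_lim:
  assumes c: "c > 0" and lim: "(\<lambda>n. e n / real n) \<longlonglongrightarrow> 0"
  shows "(\<lambda>n. gg e c (Suc n) - gg e c n) \<longlonglongrightarrow> 0"
proof (rule LIMSEQ_I)
  fix r :: real assume r: "r > 0"
  obtain J :: nat where J: "c / (2 * r) < J" using reals_Archimedean2 by blast
  show "\<exists>no. \<forall>n\<ge>no. norm (gg e c (Suc n) - gg e c n - 0) < r"
  proof (intro exI[of _ "rs e c J"] allI impI)
    fix n assume n: "rs e c J \<le> n"
    have "J \<le> idx e c n" by (rule idx_ge[OF c lim n])
    have "\<bar>sig e c (idx e c n)\<bar> \<le> c / (2 * (idx e c n + 1))" by (rule sig_bound[OF c lim])
    also have "\<dots> < r"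
    proof -
      have "c / (2 * r) < real (idx e c n) + 1" using J \<open>J \<le> idx e c n\<close> by linarith
      then show ?thesis using r c by (simp add: field_simps)
    qed
    finally show "norm (gg e c (Suc n) - gg e c n - 0) < r" by (simp add: gg_Suc)
  qed
qed



lemma sum_inc_bound:
  fixes g :: "nat \<Rightarrow> real"
  assumes "\<And>i. i \<ge> n \<Longrightarrow> \<bar>g (Suc i) - g i\<bar> \<le> B"
  shows "\<bar>g (n + m) - g n\<bar> \<le> real m * B"
proof (induction m)
  case 0 then show ?case by simp
next
  case (Suc m)
  have "\<bar>g (n + Suc m) - g (n + m)\<bar> \<le> B" using assms[of "n+m"] by simp
  then show ?case using Suc by (simp add: algebra_simps)
qed

lemma floor_constr:
  fixes g :: "nat \<Rightarrow> real"
  assumes c: "c > 0" and g0: "g 0 = 0" and inc: "\<And>n. \<bar>g (Suc n) - g n\<bar> \<le> c/2"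
    and lim: "(\<lambda>n. g (Suc n) - g n) \<longlonglongrightarrow> 0"
  defines "f \<equiv> \<lambda>n. nat \<lfloor>c * real n + g n\<rfloor>"
  shows "mono f" "f 0 = 0" "\<And>n. real (f n) = real_of_int \<lfloor>c * real n + g n\<rfloor>"
    "\<forall>m. \<exists>N. \<forall>n\<ge>N. \<bar>real (f (n + m)) - real (f n) - c * real m\<bar> \<le> 1"
proof -
  define h where "h = (\<lambda>n. c * real n + g n)"
  have hstep: "h n \<le> h (Suc n)" for n
  proof -
    have "-(g (Suc n) - g n) \<le> c/2" using inc[of n] abs_ge_minus_self order_trans by blast
    then show ?thesis using c unfolding h_def by (simp add: algebra_simps)
  qed
  have gl: "g n \<ge> - (c/2) * real n" for n
  proof (induction n)
    case 0 then show ?case using g0 by simp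
  next
    case (Suc n)
    have "-(g (Suc n) - g n) \<le> c/2" using inc[of n] abs_ge_minus_self order_trans by blast
    then show ?case using Suc by (simp add: field_simps)
  qed
  have hnn: "h n \<ge> 0" for n
  proof -
    have "c * real n \<ge> 0" using c by simp
    then show ?thesis using gl[of n] unfolding h_def by linarith
  qed
  show fr: "real (f n) = real_of_int \<lfloor>c * real n + g n\<rfloor>" for n
    using hnn[of n] unfolding f_def h_def by simp
  have "mono h" unfolding mono_iff_le_Suc using hstep by blast
  then show "mono f" unfolding f_def
    by (intro monoI nat_mono floor_mono) (metis h_def monoD)
  show "f 0 = 0" unfolding f_def using g0 by simp
  show "\<forall>m. \<exists>N. \<forall>n\<ge>N. \<bar>real (f (n + m)) - real (f n) - c * real m\<bar> \<le> 1"
  proof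
    fix m :: nat
    define z1 where "z1 = c * real m + 1"
    define z2 where "z2 = c * real m - 1"
    define e1 where "e1 = real_of_int \<lfloor>z1\<rfloor> + 1 - z1"
    define e2 where "e2 = z2 - real_of_int \<lceil>z2\<rceil> + 1"
    have e1: "e1 > 0" unfolding e1_def by linarith
    have e2: "e2 > 0" unfolding e2_def by linarith
    define e where "e = min e1 e2"
    have e: "e > 0" using e1 e2 unfolding e_def by simp
    have "e / (real m + 1) > 0" using e by simp
    with lim obtain N where N: "\<forall>i\<ge>N. \<bar>g (Suc i) - g i\<bar> < e / (real m + 1)"
      unfolding LIMSEQ_def dist_real_def by fastforce
    show "\<exists>N. \<forall>n\<ge>N. \<bar>real (f (n + m)) - real (f n) - c * real m\<bar> \<le> 1"
    proof (intro exI[of _ N] allI impI)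
      fix n assume n: "n \<ge> N"
      have "\<bar>g (n + m) - g n\<bar> \<le> real m * (e / (real m + 1))"
      proof (rule sum_inc_bound)
        fix i assume "n \<le> i"
        then have "N \<le> i" using n by simp
        then show "\<bar>g (Suc i) - g i\<bar> \<le> e / (real m + 1)" using N by (simp add: less_imp_le)
      qed
      also have "\<dots> < e" using e by (simp add: field_simps)
      finally have dl: "\<bar>g (n + m) - g n\<bar> < e" .
      define k where "k = \<lfloor>h (n + m)\<rfloor> - \<lfloor>h n\<rfloor>"
      have hk: "h (n + m) = h n + c * real m + (g (n + m) - g n)" unfolding h_def by (simp add: algebra_simps)
      have fk: "real (f (n + m)) - real (f n) = real_of_int k"
        unfolding k_def fr h_def by simp
      have "real_of_int k < c * real m + (g (n + m) - g n) + 1"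
        unfolding k_def using hk by linarith
      then have "real_of_int k < real_of_int \<lfloor>z1\<rfloor> + 1"
        using dl unfolding e_def e1_def z1_def by linarith
      then have "k \<le> \<lfloor>z1\<rfloor>" by linarith
      then have up: "real_of_int k \<le> z1" by linarith
      have "real_of_int k > c * real m + (g (n + m) - g n) - 1"
        unfolding k_def using hk by linarith
      then have "real_of_int k > real_of_int \<lceil>z2\<rceil> - 1"
        using dl unfolding e_def e2_def z2_def by linarith
      then have "k \<ge> \<lceil>z2\<rceil>" by linarith
      then have lo: "real_of_int k \<ge> z2" by linarith
      show "\<bar>real (f (n + m)) - real (f n) - c * real m\<bar> \<le> 1"
        using up lo unfolding fk z1_def z2_def by linarith
    qed
  qed
qed



lemma unbounded_from_rate:
  fixes w :: "nat \<Rightarrow> nat"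
  assumes w1: "\<And>n. w n \<ge> 1" and lim: "(\<lambda>n. ln (real (w n)) / real n) \<longlonglongrightarrow> \<gamma>" and g: "\<gamma> > 0"
  shows "filterlim (\<lambda>n. real (w n)) at_top sequentially"
proof (subst filterlim_at_top, intro allI)
  fix Z :: real
  obtain M :: nat where M: "2 * \<bar>Z\<bar> / \<gamma> \<le> M" using real_arch_simple by blast
  have ev1: "eventually (\<lambda>n. ln (real (w n)) / real n > \<gamma>/2) sequentially"
    using lim g by (intro order_tendstoD(1)) auto
  have ev2: "eventually (\<lambda>n. n \<ge> M + 1) sequentially" by (rule eventually_ge_at_top)
  show "eventually (\<lambda>n. Z \<le> real (w n)) sequentially"
    using eventually_conj[OF ev1 ev2]
  proof (rule eventually_mono)
    fix n assume a: "ln (real (w n)) / real n > \<gamma>/2 \<and> n \<ge> M + 1"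
    then have np: "real n > 0" by simp
    have "ln (real (w n)) > \<gamma>/2 * real n" using a np by (simp add: field_simps)
    moreover have "\<gamma>/2 * real n \<ge> \<gamma>/2 * M" using a g by (intro mult_left_mono) auto
    moreover have "\<gamma>/2 * M \<ge> \<bar>Z\<bar>" using M g by (simp add: field_simps)
    moreover have "ln (real (w n)) \<le> real (w n) - 1" using w1[of n] by (intro ln_le_minus_one) auto
    ultimately show "Z \<le> real (w n)" by linarith
  qed
qed

definition sfun :: "(nat \<Rightarrow> nat) \<Rightarrow> (nat \<Rightarrow> nat) \<Rightarrow> nat \<Rightarrow> nat" where
  "sfun v v' r = (LEAST s. v r \<le> v' s)"

lemma construct:
  fixes v v' :: "nat \<Rightarrow> nat" and K :: nat and \<alpha> \<beta> :: real
  assumes v1: "\<And>n. v n \<ge> 1" and v'1: "\<And>n. v' n \<ge> 1" and v0: "v 0 = 1" and v'0: "v' 0 = 1"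
    and mv': "mono v'" and step: "\<And>n. v' (Suc n) \<le> K * v' n"
    and a: "\<alpha> > 0" and b: "\<beta> > 0"
    and lv: "(\<lambda>n. ln (real (v n)) / real n) \<longlonglongrightarrow> \<alpha>"
    and lv': "(\<lambda>n. ln (real (v' n)) / real n) \<longlonglongrightarrow> \<beta>"
  shows "\<exists>(f :: nat \<Rightarrow> nat) (r :: nat \<Rightarrow> nat).
           mono f \<and> strict_mono r \<and> f 0 = 0
         \<and> bdd_above (range (\<lambda>n. real (v' (f (r n))) / real (v (r n))))
         \<and> (\<exists>\<epsilon>>0. \<forall>n. real (v' (f (r n))) / real (v (r n)) \<ge> \<epsilon>)
         \<and> (\<forall>m. \<exists>N. \<forall>n\<ge>N. \<bar>real (f (n + m)) - real (f n) - (\<alpha> / \<beta>) * real m\<bar> \<le> 1)"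
proof -
  define c where "c = \<alpha> / \<beta>"
  have c: "c > 0" unfolding c_def using a b by simp
  define s where "s = sfun v v'"
  have K1: "K \<ge> 1" using step[of 0] v'1[of 1] v'0 by simp
  have unb': "filterlim (\<lambda>n. real (v' n)) at_top sequentially"
    by (rule unbounded_from_rate[OF v'1 lv' b])
  have unb: "filterlim (\<lambda>n. real (v n)) at_top sequentially"
    by (rule unbounded_from_rate[OF v1 lv a])
  have sex: "\<exists>t. v r \<le> v' t" for r
  proof -
    have "eventually (\<lambda>n. real (v r) \<le> real (v' n)) sequentially"
      using unb' unfolding filterlim_at_top by blast
    then obtain t where "real (v r) \<le> real (v' t)" using eventually_happens' by (metis eventually_sequentially order_refl)
    then show ?thesis by auto
  qed
  have s_ge: "v r \<le> v' (s r)" for r unfolding s_def sfun_def by (rule LeastI_ex[OF sex])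
  have s_le: "v' (s r) \<le> K * v r" for r
  proof (cases "s r")
    case 0
    then show ?thesis using v'0 K1 v1[of r] by (simp add: order_trans[OF _ mult_mono[OF K1 v1[of r]]])
  next
    case (Suc t)
    have "\<not> v r \<le> v' t" using Suc unfolding s_def sfun_def by (metis lessI not_less_Least)
    then have "v' t < v r" by simp
    then have "v' (s r) \<le> K * v' t" using Suc step[of t] by simp
    also have "\<dots> \<le> K * v r" using \<open>v' t < v r\<close> by simp
    finally show ?thesis .
  qed
  have s0: "s 0 = 0" unfolding s_def sfun_def using v0 v'0 by simp
  define e where "e = (\<lambda>r. real (s r) - c * real r)"
  have e0: "e 0 = 0" unfolding e_def using s0 by simp
  have sfil: "filterlim s at_top sequentially"
  proof (subst filterlim_at_top, intro allI)
    fix Z :: nat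
    have "eventually (\<lambda>r. real (v' Z) + 1 \<le> real (v r)) sequentially"
      using unb unfolding filterlim_at_top by blast
    then show "eventually (\<lambda>r. Z \<le> s r) sequentially"
    proof (rule eventually_mono)
      fix r assume h: "real (v' Z) + 1 \<le> real (v r)"
      show "Z \<le> s r"
      proof (rule ccontr)
        assume "\<not> Z \<le> s r"
        then have "v' (s r) \<le> v' Z" using mv' by (simp add: monoD)
        then show False using h s_ge[of r] by linarith
      qed
    qed
  qed
  have A: "(\<lambda>r. ln (real (v' (s r))) / real (s r)) \<longlonglongrightarrow> \<beta>"
    using filterlim_compose[OF lv' sfil] by simp
  define d where "d = (\<lambda>r. ln (real (v' (s r))) - ln (real (v r)))"
  have d0: "d r \<ge> 0" for r unfolding d_def using s_ge[of r] v1[of r] by simp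
  have dK: "d r \<le> ln (real K)" for r
  proof -
    have "real (v' (s r)) \<le> real K * real (v r)" using s_le[of r] by (metis of_nat_le_iff of_nat_mult)
    then have "ln (real (v' (s r))) \<le> ln (real K * real (v r))"
      using v'1[of "s r"] by (intro ln_mono) auto
    also have "\<dots> = ln (real K) + ln (real (v r))" using K1 v1[of r] by (simp add: ln_mult)
    finally show ?thesis unfolding d_def by simp
  qed
  have dlim: "(\<lambda>r. d r / real r) \<longlonglongrightarrow> 0"
  proof (rule tendsto_sandwich[of "\<lambda>_. 0" _ _ "\<lambda>r. ln (real K) / real r"])
    show "eventually (\<lambda>r. 0 \<le> d r / real r) sequentially" using d0 by simp
    show "eventually (\<lambda>r. d r / real r \<le> ln (real K) / real r) sequentially"
      using dK by (simp add: divide_right_mono)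
    show "(\<lambda>_. 0) \<longlonglongrightarrow> (0::real)" by simp
    show "(\<lambda>r. ln (real K) / real r) \<longlonglongrightarrow> 0" by (rule lim_const_over_n)
  qed
  have B: "(\<lambda>r. ln (real (v' (s r))) / real r) \<longlonglongrightarrow> \<alpha>"
  proof -
    have "(\<lambda>r. ln (real (v r)) / real r + d r / real r) \<longlonglongrightarrow> \<alpha> + 0"
      by (intro tendsto_add lv dlim)
    moreover have "ln (real (v r)) / real r + d r / real r = ln (real (v' (s r))) / real r" for r
      unfolding d_def by (simp add: add_divide_distrib[symmetric])
    ultimately show ?thesis by simp
  qed
  have Q: "(\<lambda>r. (ln (real (v' (s r))) / real r) / (ln (real (v' (s r))) / real (s r))) \<longlonglongrightarrow> \<alpha> / \<beta>"
    using b by (intro tendsto_divide B A) auto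
  have ev: "eventually (\<lambda>r. (ln (real (v' (s r))) / real r) / (ln (real (v' (s r))) / real (s r))
      = e r / real r + c) sequentially"
  proof -
    have e1: "eventually (\<lambda>r. 2 \<le> real (v r)) sequentially" using unb unfolding filterlim_at_top by blast
    have e2: "eventually (\<lambda>r. 1 \<le> s r) sequentially" using sfil unfolding filterlim_at_top by blast
    have e3: "eventually (\<lambda>r. 1 \<le> r) sequentially" by (rule eventually_ge_at_top)
    show ?thesis using eventually_conj[OF e1 eventually_conj[OF e2 e3]]
    proof (rule eventually_mono)
      fix r assume h: "2 \<le> real (v r) \<and> 1 \<le> s r \<and> 1 \<le> r"
      have "real (v r) \<le> real (v' (s r))" using s_ge[of r] by simp
      then have "ln 2 \<le> ln (real (v' (s r)))" using h by (intro ln_mono) auto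
      then have L: "ln (real (v' (s r))) > 0" using ln_gt_zero[of 2] by linarith
      show "(ln (real (v' (s r))) / real r) / (ln (real (v' (s r))) / real (s r)) = e r / real r + c"
        using L h unfolding e_def by (simp add: field_simps)
    qed
  qed
  have elim: "(\<lambda>r. e r / real r) \<longlonglongrightarrow> 0"
  proof -
    have "(\<lambda>r. e r / real r + c) \<longlonglongrightarrow> \<alpha> / \<beta>"
      by (rule Lim_transform_eventually[OF Q ev])
    then have "(\<lambda>r. e r / real r + c - c) \<longlonglongrightarrow> \<alpha> / \<beta> - c" by (intro tendsto_diff) auto
    then show ?thesis unfolding c_def by simp
  qed
  define g where "g = gg e c"
  have g0: "g 0 = 0" unfolding g_def gg_def by simp
  have ginc: "\<And>n. \<bar>g (Suc n) - g n\<bar> \<le> c/2" unfolding g_def by (rule gg_inc_bound[OF c elim])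
  have glim: "(\<lambda>n. g (Suc n) - g n) \<longlonglongrightarrow> 0" unfolding g_def by (rule gg_inc_lim[OF c elim])
  define f where "f = (\<lambda>n. nat \<lfloor>c * real n + g n\<rfloor>)"
  note F = floor_constr[OF c g0 ginc glim, folded f_def]
  define r where "r = rs e c"
  have rsm: "strict_mono r" unfolding r_def by (rule rs_strict_mono[OF c elim])
  have fr: "f (r j) = s (r j)" for j
  proof -
    have "g (r j) = e (r j)" unfolding g_def r_def by (rule gg_at_rs[OF c elim e0])
    then have "c * real (r j) + g (r j) = real (s (r j))" unfolding e_def by simp
    then show ?thesis unfolding f_def by simp
  qed
  have rat_up: "real (v' (f (r n))) / real (v (r n)) \<le> real K" for n
  proof -
    have "real (v' (s (r n))) \<le> real K * real (v (r n))" using s_le by (metis of_nat_le_iff of_nat_mult)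
    then show ?thesis using v1[of "r n"] fr[of n] by (simp add: field_simps)
  qed
  have rat_lo: "real (v' (f (r n))) / real (v (r n)) \<ge> 1" for n
    using s_ge[of "r n"] v1[of "r n"] fr[of n] by (simp add: field_simps)
  show ?thesis
  proof (rule exI[of _ f], rule exI[of _ r], intro conjI)
    show "mono f" by (rule F(1))
    show "strict_mono r" by (rule rsm)
    show "f 0 = 0" unfolding f_def using g0 by simp
    show "bdd_above (range (\<lambda>n. real (v' (f (r n))) / real (v (r n))))"
      using rat_up by (intro bdd_aboveI[of _ "real K"]) auto
    show "\<exists>\<epsilon>>0. \<forall>n. real (v' (f (r n))) / real (v (r n)) \<ge> \<epsilon>"
      using rat_lo by (intro exI[of _ 1]) auto
    show "\<forall>m. \<exists>N. \<forall>n\<ge>N. \<bar>real (f (n + m)) - real (f n) - (\<alpha> / \<beta>) * real m\<bar> \<le> 1"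
      unfolding f_def c_def[symmetric] by (rule F(4))
  qed
qed


lemma rate_lim:
  assumes "group G" "fin_gen_set G S"
  shows "(\<lambda>n. ln (real (ball_card G S n)) / real n) \<longlonglongrightarrow> ln (growth_rate G S)"
proof -
  define u where "u = (\<lambda>n. ln (real (ball_card G S n)))"
  have v1: "\<And>n. ball_card G S n \<ge> 1" by (rule ball_card_pos[OF assms])
  have nn: "\<And>n. u n \<ge> 0" unfolding u_def using v1 by simp
  have sub: "\<And>m n. u (m + n) \<le> u m + u n"
  proof -
    fix m n
    have "real (ball_card G S (m + n)) \<le> real (ball_card G S m) * real (ball_card G S n)"
      using ball_card_submult[OF assms, of m n] by (metis of_nat_le_iff of_nat_mult)
    then have "ln (real (ball_card G S (m + n))) \<le> ln (real (ball_card G S m) * real (ball_card G S n))"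
      using v1[of "m+n"] by (intro ln_mono) auto
    also have "\<dots> = u m + u n" unfolding u_def using v1[of m] v1[of n] by (simp add: ln_mult)
    finally show "u (m + n) \<le> u m + u n" unfolding u_def .
  qed
  define L where "L = (INF n\<in>{1..}. u n / real n)"
  have lim: "(\<lambda>n. u n / real n) \<longlonglongrightarrow> L" unfolding L_def by (rule fekete(1)[OF nn sub])
  have "(\<lambda>n. exp (u n / real n)) \<longlonglongrightarrow> exp L" by (intro tendsto_exp lim)
  moreover have "eventually (\<lambda>n. exp (u n / real n) = root n (real (ball_card G S n))) sequentially"
  proof -
    have "eventually (\<lambda>n. n \<ge> 1) sequentially" by (rule eventually_ge_at_top)
    then show ?thesis
    proof (rule eventually_mono)
      fix n :: nat assume "n \<ge> 1"
      then show "exp (u n / real n) = root n (real (ball_card G S n))"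
        using v1[of n] unfolding u_def by (simp add: root_powr_inverse powr_def)
    qed
  qed
  ultimately have "(\<lambda>n. root n (real (ball_card G S n))) \<longlonglongrightarrow> exp L"
    by (rule Lim_transform_eventually)
  then have "growth_rate G S = exp L" unfolding growth_rate_def by (rule limI)
  then have "ln (growth_rate G S) = L" by simp
  then show ?thesis using lim unfolding u_def by simp
qed

theorem lemma3p1:
  fixes G :: "('a, 'c) monoid_scheme" and G' :: "('b, 'd) monoid_scheme"
    and S :: "'a set" and S' :: "'b set"
  assumes "group G" and "group G'"
    and "fin_gen_set G S" and "fin_gen_set G' S'"
    and "growth_rate G S > 1" and "growth_rate G' S' > 1"
  shows "\<exists>(f :: nat \<Rightarrow> nat) (r :: nat \<Rightarrow> nat).
           mono f \<and> strict_mono r \<and> f 0 = 0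
         \<and> bdd_above (range (\<lambda>n. real (ball_card G' S' (f (r n))) / real (ball_card G S (r n))))
         \<and> (\<exists>\<epsilon>>0. \<forall>n. real (ball_card G' S' (f (r n))) / real (ball_card G S (r n)) \<ge> \<epsilon>)
         \<and> (\<forall>m. \<exists>N. \<forall>n\<ge>N.
              \<bar>real (f (n + m)) - real (f n)
                 - (ln (growth_rate G S) / ln (growth_rate G' S')) * real m\<bar> \<le> 1)"
proof (rule construct)
  show "\<And>n. ball_card G S n \<ge> 1" by (rule ball_card_pos[OF assms(1,3)])
  show "\<And>n. ball_card G' S' n \<ge> 1" by (rule ball_card_pos[OF assms(2,4)])
  show "ball_card G S 0 = 1" by (rule ball_card_0[OF assms(1,3)])
  show "ball_card G' S' 0 = 1" by (rule ball_card_0[OF assms(2,4)])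
  show "mono (ball_card G' S')" by (rule ball_card_mono[OF assms(2,4)])
  show "\<And>n. ball_card G' S' (Suc n) \<le> ball_card G' S' 1 * ball_card G' S' n"
    using ball_card_submult[OF assms(2,4)] by (metis Suc_eq_plus1 mult.commute)
  show "ln (growth_rate G S) > 0" using assms(5) by simp
  show "ln (growth_rate G' S') > 0" using assms(6) by simp
  show "(\<lambda>n. ln (real (ball_card G S n)) / real n) \<longlonglongrightarrow> ln (growth_rate G S)"
    by (rule rate_lim[OF assms(1,3)])
  show "(\<lambda>n. ln (real (ball_card G' S' n)) / real n) \<longlonglongrightarrow> ln (growth_rate G' S')"
    by (rule rate_lim[OF assms(2,4)])
qed

end
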